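(* Let $\mathbb H\subseteq\mathcal G^{\mathrm{dyad}}$ be a group, $n,m\ge1$, $0\le k\le n\wedge m$, $0\le r\le(n\wedge m)-k$, and let $f:((0,1]\times\mathbb R)^n\to\mathbb R$, $f':((0,1]\times\mathbb R)^m\to\mathbb R$ be measurable with $f\in L_2^n$, $f'\in L_2^m$ and $\int_{((0,1]\times\mathbb R)^k}|f(\alpha,\gamma,\rho)f'(\rho,\gamma,\beta)|\,d\mathbbm m^{\otimes k}(\rho)<\infty$ for all $(\alpha,\beta,\gamma)\in((0,1]\times\mathbb R)^{n-k-r}\times((0,1]\times\mathbb R)^{m-k-r}\times((0,1]\times\mathbb R)^r$. Define $$(f\otimes_k^rf')(\alpha,\beta,\gamma)=\Pi_x(\gamma)\int_{((0,1]\times\mathbb R)^k}f(\alpha,\gamma,\rho)f'(\rho,\gamma,\beta)\,d\mathbbm m^{\otimes k}(\rho),$$ where $\Pi_x(\gamma)$ is the product of the $x$-coordinates of $\gamma$. If $f$ is constant on the orbits of $\mathbb H[n]$ and $f'$ is constant on the orbits of $\mathbb H[m]$, then $f\otimes_k^rf'$ is constant on the orbits of $\mathbb H[n+m-2k-r]$.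
   Context: $\mu$ is a $\sigma$-finite Borel measure on $\mathbb R$ and $\mathbbm m=\lambda\otimes\mu$ on $(0,1]\times\mathbb R$ with $\lambda$ Lebesgue measure; $L_2^n=L_2(((0,1]\times\mathbb R)^n,\mathbbm m^{\otimes n})$. $\mathcal G^{\mathrm{dyad}}$ is the group of maps $g_\pi(t)=\pi(j)2^{-d}-(j2^{-d}-t)$ for $t\in((j-1)2^{-d},j2^{-d}]$, $\pi$ a permutation of $\{1,\dots,2^d\}$, $d\ge0$. For $g\in\mathcal G^{\mathrm{dyad}}$, $g[p]((t_1,x_1),\dots,(t_p,x_p))=((g(t_1),x_1),\dots,(g(t_p),x_p))$ and $\mathbb H[p]=\{g[p]:g\in\mathbb H\}$; the orbit of $z$ is $\{g[p](z):g\in\mathbb H\}$. *)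

theory Defs
  imports "HOL-Analysis.Analysis"
begin

definition mm :: "real measure \<Rightarrow> (real \<times> real) measure" where
  "mm mu = restrict_space lborel {0<..1} \<Otimes>\<^sub>M mu"

text \<open>Product measure m^{otimes p}; p-tuples are extensional functions on {..<p}.\<close>
definition mmp :: "real measure \<Rightarrow> nat \<Rightarrow> (nat \<Rightarrow> real \<times> real) measure" where
  "mmp mu p = PiM {..<p} (\<lambda>_. mm mu)"

definition G_dyad :: "(real \<Rightarrow> real) set" where
  "G_dyad = {g. \<exists>(d::nat) (\<pi>::nat \<Rightarrow> nat). \<pi> permutes {1..2^d} \<and>
      (\<forall>j\<in>{1..2^d}. \<forall>t\<in>{(real j - 1) / 2^d <.. real j / 2^d}.
          g t = real (\<pi> j) / 2^d - (real j / 2^d - t)) \<and>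
      (\<forall>t. t \<notin> {0<..1} \<longrightarrow> g t = t)}"

definition is_group_of_maps :: "(real \<Rightarrow> real) set \<Rightarrow> bool" where
  "is_group_of_maps H \<longleftrightarrow> id \<in> H \<and> (\<forall>g\<in>H. \<forall>h\<in>H. g \<circ> h \<in> H) \<and>
      (\<forall>g\<in>H. \<exists>h\<in>H. g \<circ> h = id \<and> h \<circ> g = id)"

definition lift_map :: "(real \<Rightarrow> real) \<Rightarrow> nat \<Rightarrow> (nat \<Rightarrow> real \<times> real) \<Rightarrow> (nat \<Rightarrow> real \<times> real)" where
  "lift_map g p z = (\<lambda>i\<in>{..<p}. (g (fst (z i)), snd (z i)))"

definition orbit :: "(real \<Rightarrow> real) set \<Rightarrow> nat \<Rightarrow> (nat \<Rightarrow> real \<times> real) \<Rightarrow> (nat \<Rightarrow> real \<times> real) set" where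
  "orbit H p z = {lift_map g p z | g. g \<in> H}"

definition const_on_orbits :: "real measure \<Rightarrow> (real \<Rightarrow> real) set \<Rightarrow> nat \<Rightarrow> ((nat \<Rightarrow> real \<times> real) \<Rightarrow> real) \<Rightarrow> bool" where
  "const_on_orbits mu H p F \<longleftrightarrow>
     (\<forall>z\<in>space (mmp mu p). \<forall>w\<in>orbit H p z. F w = F z)"

definition tcat :: "nat \<Rightarrow> nat \<Rightarrow> (nat \<Rightarrow> 'a) \<Rightarrow> (nat \<Rightarrow> 'a) \<Rightarrow> nat \<Rightarrow> 'a" where
  "tcat p q a b = (\<lambda>i\<in>{..<p+q}. if i < p then a i else b (i - p))"

definition tpart :: "nat \<Rightarrow> nat \<Rightarrow> (nat \<Rightarrow> 'a) \<Rightarrow> nat \<Rightarrow> 'a" where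
  "tpart s l z = (\<lambda>i\<in>{..<l}. z (s + i))"

definition contr_integrand ::
  "nat \<Rightarrow> nat \<Rightarrow> nat \<Rightarrow> nat \<Rightarrow> ((nat \<Rightarrow> real \<times> real) \<Rightarrow> real) \<Rightarrow> ((nat \<Rightarrow> real \<times> real) \<Rightarrow> real)
    \<Rightarrow> (nat \<Rightarrow> real \<times> real) \<Rightarrow> (nat \<Rightarrow> real \<times> real) \<Rightarrow> (nat \<Rightarrow> real \<times> real) \<Rightarrow> (nat \<Rightarrow> real \<times> real) \<Rightarrow> real" where
  "contr_integrand n m k r f f' \<alpha> \<beta> \<gamma> \<rho> =
     f (tcat (n - k - r + r) k (tcat (n - k - r) r \<alpha> \<gamma>) \<rho>) *
     f' (tcat (k + r) (m - k - r) (tcat k r \<rho> \<gamma>) \<beta>)"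

text \<open>(f \<otimes>_k^r f')(alpha,beta,gamma), as a function of the concatenated (n+m-2k-r)-tuple.\<close>
definition contraction ::
  "real measure \<Rightarrow> nat \<Rightarrow> nat \<Rightarrow> nat \<Rightarrow> nat \<Rightarrow> ((nat \<Rightarrow> real \<times> real) \<Rightarrow> real)
     \<Rightarrow> ((nat \<Rightarrow> real \<times> real) \<Rightarrow> real) \<Rightarrow> (nat \<Rightarrow> real \<times> real) \<Rightarrow> real" where
  "contraction mu n m k r f f' z =
     (let a = n - k - r; b = m - k - r;
          \<alpha> = tpart 0 a z; \<beta> = tpart a b z; \<gamma> = tpart (a + b) r z
      in (\<Prod>i<r. snd (\<gamma> i)) *
         (\<integral>\<rho>. contr_integrand n m k r f f' \<alpha> \<beta> \<gamma> \<rho> \<partial>mmp mu k))"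

end

theory Submission
  imports Defs
begin

definition Iv :: "nat \<Rightarrow> nat \<Rightarrow> real set" where
  "Iv d j = {(real j - 1) / 2^d <.. real j / 2^d}"

lemma Iv_ceil: "t \<in> Iv d j \<longleftrightarrow> \<lceil>t * 2^d\<rceil> = int j"
proof -
  have p: "(0::real) < 2^d" by simp
  have "t \<in> Iv d j \<longleftrightarrow> real j - 1 < t * 2^d \<and> t * 2^d \<le> real j"
    unfolding Iv_def using p by (auto simp: field_simps)
  also have "\<dots> \<longleftrightarrow> \<lceil>t * 2^d\<rceil> = int j" by (simp add: ceiling_eq_iff)
  finally show ?thesis .
qed

lemma Iv_disj: "disjoint_family_on (Iv d) S"
  unfolding disjoint_family_on_def by (auto simp: Iv_ceil)

lemma Iv_cover: "{0<..1::real} = (\<Union>j\<in>{1..2^d}. Iv d j)"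
proof (intro equalityI subsetI)
  fix t :: real assume t: "t \<in> {0<..1}"
  let ?c = "\<lceil>t * 2^d\<rceil>"
  have "0 < t * 2^d" using t by simp
  hence c1: "1 \<le> ?c" by (simp add: one_le_ceiling)
  have "t * 2^d \<le> 2^d" using t by simp
  hence c2: "?c \<le> 2^d" by (metis ceiling_le_iff of_int_numeral of_int_power)
  have "t \<in> Iv d (nat ?c)" using c1 by (simp add: Iv_ceil)
  moreover have "nat ?c \<in> {1..2^d}" using c1 c2 by (simp add: nat_le_iff le_nat_iff)
  ultimately show "t \<in> (\<Union>j\<in>{1..2^d}. Iv d j)" by blast
next
  fix t assume "t \<in> (\<Union>j\<in>{1..2^d}. Iv d j)"
  then obtain j where j: "j \<in> {1..2^d}" "t \<in> Iv d j" by blast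
  have "real j - 1 < t * 2^d" "t * 2^d \<le> real j" using j(2) by (auto simp: Iv_def field_simps)
  moreover have "real j \<ge> 1" "real j \<le> 2^d" using j(1) by auto
  ultimately have "0 < t * 2^d" "t * 2^d \<le> 2^d" by linarith+
  thus "t \<in> {0<..1}" by (simp add: zero_less_mult_iff)
qed

lemma Iv_shift:
  assumes "j \<in> {1..2^d}" "j' \<in> {1..2^d}"
  shows "t + (real j' - real j) / 2^d \<in> Iv d j' \<longleftrightarrow> t \<in> Iv d j"
proof -
  have p: "(0::real) < 2^d" by simp
  have e: "(t + (real j' - real j) / 2^d) * 2^d = t * 2^d + (real j' - real j)"
    using p by (simp add: field_simps)
  show ?thesis unfolding Iv_ceil e
    by (smt (verit, best) ceiling_add_of_int of_int_diff of_int_of_nat_eq)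
qed

lemma Iv_borel[measurable]: "Iv d j \<in> sets borel" unfolding Iv_def by simp

lemma translate_emeasure:
  assumes "B \<in> sets borel"
  shows "emeasure lborel ((\<lambda>t::real. t + c) -` B) = emeasure lborel B"
proof -
  have "emeasure lborel B = emeasure (distr lborel borel ((+) c)) B"
    by (simp add: lborel_distr_plus)
  also have "\<dots> = emeasure lborel ((+) c -` B \<inter> space lborel)"
    using assms by (subst emeasure_distr) auto
  also have "(+) c -` B \<inter> space lborel = (\<lambda>t::real. t + c) -` B"
    by (auto simp: add.commute)
  finally show ?thesis by simp
qed

lemma G_dyad_pres:
  assumes "g \<in> G_dyad"
  shows "g \<in> measurable (restrict_space lborel {0<..1::real}) (restrict_space lborel {0<..1})
     \<and> distr (restrict_space lborel {0<..1::real}) (restrict_space lborel {0<..1}) g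
          = restrict_space lborel {0<..1}"
proof -
  let ?L = "restrict_space lborel {0<..1::real}"
  from assms obtain d and \<pi> :: "nat \<Rightarrow> nat" where pi: "\<pi> permutes {1..2^d}"
    and gj: "\<forall>j\<in>{1..2^d}. \<forall>t\<in>{(real j - 1) / 2^d <.. real j / 2^d}.
          g t = real (\<pi> j) / 2^d - (real j / 2^d - t)"
    unfolding G_dyad_def by blast
  define J where "J = {1..(2::nat)^d}"
  define c where "c j = (real (\<pi> j) - real j) / 2^d" for j
  have gI: "g t = t + c j" if "j \<in> J" "t \<in> Iv d j" for j t
    using gj that unfolding J_def Iv_def c_def by (auto simp: field_simps)
  have piJ: "\<pi> j \<in> J" if "j \<in> J" for j
    using permutes_in_image[OF pi] that unfolding J_def by blast
  have cov: "{0<..1::real} = (\<Union>j\<in>J. Iv d j)" unfolding J_def by (rule Iv_cover)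
  have pre: "g -` A \<inter> {0<..1} = (\<Union>j\<in>J. (\<lambda>t. t + c j) -` (Iv d (\<pi> j) \<inter> A))" for A
  proof -
    have "g -` A \<inter> {0<..1} = (\<Union>j\<in>J. Iv d j \<inter> g -` A)" using cov by blast
    also have "\<dots> = (\<Union>j\<in>J. (\<lambda>t. t + c j) -` (Iv d (\<pi> j) \<inter> A))"
    proof (intro SUP_cong refl)
      fix j assume j: "j \<in> J"
      show "Iv d j \<inter> g -` A = (\<lambda>t. t + c j) -` (Iv d (\<pi> j) \<inter> A)"
        using gI[OF j] Iv_shift[of j d "\<pi> j"] j piJ[OF j] unfolding c_def J_def by auto
    qed
    finally show ?thesis .
  qed
  have setsL: "A \<in> sets ?L \<longleftrightarrow> A \<subseteq> {0<..1} \<and> A \<in> sets borel" for A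
    by (subst sets_restrict_space_iff) auto
  have spL: "space ?L = {0<..1}" by simp
  have mapsto: "g t \<in> {0<..1}" if "t \<in> {0<..1}" for t
  proof -
    from that cov obtain j where j: "j \<in> J" "t \<in> Iv d j" by blast
    have "g t \<in> Iv d (\<pi> j)" using gI[OF j] Iv_shift[of j d "\<pi> j"] j piJ[OF j(1)]
      unfolding c_def J_def by auto
    thus ?thesis using cov piJ[OF j(1)] by blast
  qed
  have preB: "g -` A \<inter> {0<..1} \<in> sets borel" if "A \<in> sets borel" for A
    unfolding pre using that by (intro sets.finite_UN) (auto simp: J_def)
  have meas: "g \<in> measurable ?L ?L"
  proof (rule measurableI)
    fix x assume "x \<in> space ?L" thus "g x \<in> space ?L" using mapsto by simp
  next
    fix A assume "A \<in> sets ?L"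
    thus "g -` A \<inter> space ?L \<in> sets ?L" using preB by (auto simp: setsL)
  qed
  have emL: "emeasure ?L X = emeasure lborel X" if "X \<subseteq> {0<..1}" for X
    using that by (intro emeasure_restrict_space) auto
  have "distr ?L ?L g = ?L"
  proof (rule measure_eqI)
    fix A assume A: "A \<in> sets (distr ?L ?L g)"
    hence A': "A \<subseteq> {0<..1}" "A \<in> sets borel" by (auto simp: setsL)
    have "emeasure (distr ?L ?L g) A = emeasure ?L (g -` A \<inter> {0<..1})"
      using A meas by (subst emeasure_distr) auto
    also have "\<dots> = emeasure lborel (g -` A \<inter> {0<..1})" by (rule emL) auto
    also have "\<dots> = (\<Sum>j\<in>J. emeasure lborel ((\<lambda>t. t + c j) -` (Iv d (\<pi> j) \<inter> A)))"
      unfolding pre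
    proof (rule sum_emeasure[symmetric])
      show "(\<lambda>j. (\<lambda>t. t + c j) -` (Iv d (\<pi> j) \<inter> A)) ` J \<subseteq> sets lborel"
        using A' by auto
      show "disjoint_family_on (\<lambda>j. (\<lambda>t. t + c j) -` (Iv d (\<pi> j) \<inter> A)) J"
      proof -
        have "(\<lambda>t. t + c j) -` (Iv d (\<pi> j) \<inter> A) \<subseteq> Iv d j" if "j \<in> J" for j
          using Iv_shift[of j d "\<pi> j"] that piJ[OF that] unfolding c_def J_def by auto
        thus ?thesis using Iv_disj[of d J] unfolding disjoint_family_on_def by blast
      qed
      show "finite J" by (simp add: J_def)
    qed
    also have "\<dots> = (\<Sum>j\<in>J. emeasure lborel (Iv d (\<pi> j) \<inter> A))"
      using A' by (intro sum.cong refl translate_emeasure) auto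
    also have "\<dots> = (\<Sum>j\<in>J. emeasure lborel (Iv d j \<inter> A))"
      using sum.permute[OF pi[folded J_def], of "\<lambda>j. emeasure lborel (Iv d j \<inter> A)"]
      by (simp add: o_def)
    also have "\<dots> = emeasure lborel (\<Union>j\<in>J. Iv d j \<inter> A)"
      using A' Iv_disj[of d J] by (intro sum_emeasure)
        (auto simp: J_def disjoint_family_on_def)
    also have "(\<Union>j\<in>J. Iv d j \<inter> A) = A" using A'(1) cov by blast
    also have "emeasure lborel A = emeasure ?L A" using A' by (simp add: emL)
    finally show "emeasure (distr ?L ?L g) A = emeasure ?L A" .
  qed simp
  with meas show ?thesis by simp
qed

lemma sf_mm:
  assumes "sigma_finite_measure mu"
  shows "sigma_finite_measure (mm mu)"
  unfolding mm_def
  by (intro sigma_finite_pair_measure sigma_finite_measure_restrict_space assms)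
     (auto intro: sigma_finite_lborel)

lemma mm_pres:
  assumes "sigma_finite_measure mu" "g \<in> G_dyad"
  shows "(\<lambda>p. (g (fst p), snd p)) \<in> measurable (mm mu) (mm mu)
     \<and> distr (mm mu) (mm mu) (\<lambda>p. (g (fst p), snd p)) = mm mu"
proof -
  let ?L = "restrict_space lborel {0<..1::real}"
  have g: "g \<in> measurable ?L ?L" "distr ?L ?L g = ?L" using G_dyad_pres[OF assms(2)] by auto
  have m: "(\<lambda>p. (g (fst p), snd p)) \<in> measurable (mm mu) (mm mu)"
    unfolding mm_def using g(1) by measurable
  have "distr ?L ?L g \<Otimes>\<^sub>M distr mu mu (\<lambda>x. x) = distr (?L \<Otimes>\<^sub>M mu) (?L \<Otimes>\<^sub>M mu) (\<lambda>(x, y). (g x, (\<lambda>x. x) y))"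
    by (rule pair_measure_distr) (use g(1) assms(1) in auto)
  hence "distr (mm mu) (mm mu) (\<lambda>p. (g (fst p), snd p)) = mm mu"
    unfolding mm_def using g(2) by (simp add: case_prod_beta')
  with m show ?thesis by simp
qed

lemma mmp_pres:
  assumes "sigma_finite_measure mu" "g \<in> G_dyad"
  shows "lift_map g p \<in> measurable (mmp mu p) (mmp mu p)
     \<and> distr (mmp mu p) (mmp mu p) (lift_map g p) = mmp mu p"
proof -
  let ?T = "\<lambda>p. (g (fst p), snd p)"
  have T: "?T \<in> measurable (mm mu) (mm mu)" "distr (mm mu) (mm mu) ?T = mm mu"
    using mm_pres[OF assms] by auto
  interpret product_sigma_finite "\<lambda>_. mm mu"
    unfolding product_sigma_finite_def using sf_mm[OF assms(1)] by auto
  have lm: "lift_map g p = (\<lambda>z. \<lambda>i\<in>{..<p}. ?T (z i))"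
    unfolding lift_map_def by auto
  have m: "lift_map g p \<in> measurable (mmp mu p) (mmp mu p)"
    unfolding lm mmp_def
    by (intro measurable_restrict measurable_compose[OF _ T(1)] measurable_component_singleton) simp
  have "distr (mmp mu p) (mmp mu p) (lift_map g p) = mmp mu p"
    unfolding mmp_def
  proof (rule PiM_eqI)
    fix A assume A: "\<And>i. i \<in> {..<p} \<Longrightarrow> A i \<in> sets (mm mu)"
    have eq: "lift_map g p -` Pi\<^sub>E {..<p} A \<inter> space (Pi\<^sub>M {..<p} (\<lambda>_. mm mu))
        = Pi\<^sub>E {..<p} (\<lambda>i. ?T -` A i \<inter> space (mm mu))"
      unfolding lm space_PiM by (auto simp: PiE_iff)
    have "emeasure (distr (Pi\<^sub>M {..<p} (\<lambda>_. mm mu)) (Pi\<^sub>M {..<p} (\<lambda>_. mm mu)) (lift_map g p)) (Pi\<^sub>E {..<p} A)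
       = emeasure (Pi\<^sub>M {..<p} (\<lambda>_. mm mu)) (lift_map g p -` Pi\<^sub>E {..<p} A \<inter> space (Pi\<^sub>M {..<p} (\<lambda>_. mm mu)))"
      using m A unfolding mmp_def by (subst emeasure_distr) (auto intro!: sets_PiM_I_finite)
    also have "\<dots> = (\<Prod>i\<in>{..<p}. emeasure (mm mu) (?T -` A i \<inter> space (mm mu)))"
      unfolding eq using A T(1) by (intro emeasure_PiM) (auto simp: measurable_sets)
    also have "\<dots> = (\<Prod>i\<in>{..<p}. emeasure (distr (mm mu) (mm mu) ?T) (A i))"
      using A T(1) by (intro prod.cong refl) (simp add: emeasure_distr)
    also have "\<dots> = (\<Prod>i\<in>{..<p}. emeasure (mm mu) (A i))" using T(2) by simp
    finally show "emeasure (distr (Pi\<^sub>M {..<p} (\<lambda>_. mm mu)) (Pi\<^sub>M {..<p} (\<lambda>_. mm mu)) (lift_map g p)) (Pi\<^sub>E {..<p} A)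
       = (\<Prod>i\<in>{..<p}. emeasure (mm mu) (A i))" .
  qed simp_all
  with m show ?thesis by simp
qed

lemma space_mmp: "space (mmp mu p) = Pi\<^sub>E {..<p} (\<lambda>_. space (mm mu))"
  unfolding mmp_def by (simp add: space_PiM)

lemma tpart_space: "z \<in> space (mmp mu p) \<Longrightarrow> s + l \<le> p \<Longrightarrow> tpart s l z \<in> space (mmp mu l)"
  unfolding space_mmp tpart_def by (auto simp: PiE_iff)

lemma tcat_space: "x \<in> space (mmp mu p) \<Longrightarrow> y \<in> space (mmp mu q) \<Longrightarrow>
    tcat p q x y \<in> space (mmp mu (p + q))"
  unfolding space_mmp tcat_def by (auto simp: PiE_iff)

lemma tpart_lift: "s + l \<le> p \<Longrightarrow> tpart s l (lift_map g p z) = lift_map g l (tpart s l z)"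
  unfolding tpart_def lift_map_def by (auto simp: fun_eq_iff)

lemma tcat_lift: "tcat p q (lift_map g p x) (lift_map g q y) = lift_map g (p + q) (tcat p q x y)"
  unfolding tcat_def lift_map_def by (auto simp: fun_eq_iff)

lemma tcat_meas2: "x \<in> space (mmp mu p) \<Longrightarrow> (\<lambda>y. tcat p q x y) \<in> measurable (mmp mu q) (mmp mu (p + q))"
  unfolding tcat_def
  apply (subst (2) mmp_def)
  apply (rule measurable_restrict)
  subgoal for i
    by (cases "i < p") (auto simp: space_PiM mmp_def PiE_iff intro!: measurable_component_singleton measurable_const)
  done

lemma tcat_meas1: "y \<in> space (mmp mu q) \<Longrightarrow> (\<lambda>x. tcat p q x y) \<in> measurable (mmp mu p) (mmp mu (p + q))"
  unfolding tcat_def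
  apply (subst (2) mmp_def)
  apply (rule measurable_restrict)
  subgoal for i
    by (cases "i < p") (auto simp: space_PiM mmp_def PiE_iff intro!: measurable_component_singleton measurable_const)
  done

theorem lemma5p5:
  fixes mu :: "real measure" and H :: "(real \<Rightarrow> real) set"
    and n m k r :: nat and f f' :: "(nat \<Rightarrow> real \<times> real) \<Rightarrow> real"
  assumes "sigma_finite_measure mu" and "sets mu = sets borel"
    and "H \<subseteq> G_dyad" and "is_group_of_maps H"
    and "n \<ge> 1" and "m \<ge> 1" and "k \<le> min n m" and "r \<le> min n m - k"
    and "f \<in> borel_measurable (mmp mu n)" and "f' \<in> borel_measurable (mmp mu m)"
    and "integrable (mmp mu n) (\<lambda>z. (f z)\<^sup>2)" and "integrable (mmp mu m) (\<lambda>z. (f' z)\<^sup>2)"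
    and "\<And>\<alpha> \<beta> \<gamma>. \<alpha> \<in> space (mmp mu (n - k - r)) \<Longrightarrow> \<beta> \<in> space (mmp mu (m - k - r)) \<Longrightarrow>
           \<gamma> \<in> space (mmp mu r) \<Longrightarrow>
           (\<integral>\<^sup>+\<rho>. ennreal \<bar>contr_integrand n m k r f f' \<alpha> \<beta> \<gamma> \<rho>\<bar> \<partial>mmp mu k) < \<infinity>"
    and "const_on_orbits mu H n f" and "const_on_orbits mu H m f'"
  shows "const_on_orbits mu H (n + m - 2 * k - r) (contraction mu n m k r f f')"
proof -
  note sf = assms(1)
  have kr: "k + r \<le> n" "k + r \<le> m" using assms(7,8) by auto
  define a where "a = n - k - r"
  define b where "b = m - k - r"
  have N: "n + m - 2 * k - r = a + b + r" using kr unfolding a_def b_def by simp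
  have en: "n - k - r + r + k = n" using kr by simp
  have em: "k + r + (m - k - r) = m" using kr by simp
  show ?thesis unfolding const_on_orbits_def
  proof (intro ballI)
    fix z w assume z: "z \<in> space (mmp mu (n + m - 2 * k - r))"
      and w: "w \<in> orbit H (n + m - 2 * k - r) z"
    from w obtain g where g: "g \<in> H" and wz: "w = lift_map g (n + m - 2 * k - r) z"
      unfolding orbit_def by blast
    have gG: "g \<in> G_dyad" using g assms(3) by blast
    define \<alpha> where "\<alpha> = tpart 0 a z"
    define \<beta> where "\<beta> = tpart a b z"
    define \<gamma> where "\<gamma> = tpart (a + b) r z"
    have tw: "tpart 0 a w = lift_map g a \<alpha>" "tpart a b w = lift_map g b \<beta>"
         "tpart (a + b) r w = lift_map g r \<gamma>"
      unfolding wz \<alpha>_def \<beta>_def \<gamma>_def N by (auto intro: tpart_lift)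
    have sp: "\<alpha> \<in> space (mmp mu a)" "\<beta> \<in> space (mmp mu b)" "\<gamma> \<in> space (mmp mu r)"
      unfolding \<alpha>_def \<beta>_def \<gamma>_def using z unfolding N by (auto intro: tpart_space)
    have prodeq: "(\<Prod>i<r. snd (lift_map g r \<gamma> i)) = (\<Prod>i<r. snd (\<gamma> i))"
      by (intro prod.cong refl) (simp add: lift_map_def)
    let ?M = "mmp mu k"
    let ?F = "contr_integrand n m k r f f' (lift_map g a \<alpha>) (lift_map g b \<beta>) (lift_map g r \<gamma>)"
    have Lm: "lift_map g k \<in> measurable ?M ?M" "distr ?M ?M (lift_map g k) = ?M"
      using mmp_pres[OF sf gG] by auto
    have lsp: "lift_map g p x \<in> space (mmp mu p)" if "x \<in> space (mmp mu p)" for p x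
      using that measurable_space[OF conjunct1[OF mmp_pres[OF sf gG]]] by blast
    have Fm: "?F \<in> borel_measurable ?M"
    proof -
      have s1: "tcat (n - k - r) r (lift_map g a \<alpha>) (lift_map g r \<gamma>) \<in> space (mmp mu (n - k - r + r))"
        using sp lsp unfolding a_def by (intro tcat_space) auto
      have m1: "(\<lambda>\<rho>. tcat (n - k - r + r) k (tcat (n - k - r) r (lift_map g a \<alpha>) (lift_map g r \<gamma>)) \<rho>)
          \<in> measurable ?M (mmp mu n)"
        using tcat_meas2[OF s1, of k] unfolding en .
      have m2: "(\<lambda>\<rho>. tcat k r \<rho> (lift_map g r \<gamma>)) \<in> measurable ?M (mmp mu (k + r))"
        using sp lsp by (intro tcat_meas1) auto
      have m3: "(\<lambda>x. tcat (k + r) (m - k - r) x (lift_map g b \<beta>)) \<in> measurable (mmp mu (k + r)) (mmp mu m)"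
        using tcat_meas1[of "lift_map g b \<beta>" mu "m - k - r" "k + r"] sp lsp unfolding em b_def by auto
      show ?thesis unfolding contr_integrand_def
        by (intro borel_measurable_times measurable_compose[OF m1 assms(9)]
            measurable_compose[OF measurable_compose[OF m2 m3] assms(10)])
    qed
    have pw: "?F (lift_map g k \<rho>) = contr_integrand n m k r f f' \<alpha> \<beta> \<gamma> \<rho>" if \<rho>: "\<rho> \<in> space ?M" for \<rho>
    proof -
      define X where "X = tcat (n - k - r + r) k (tcat (n - k - r) r \<alpha> \<gamma>) \<rho>"
      define Y where "Y = tcat (k + r) (m - k - r) (tcat k r \<rho> \<gamma>) \<beta>"
      have X: "X \<in> space (mmp mu n)"
        using tcat_space[OF tcat_space[OF sp(1)[unfolded a_def] sp(3)] \<rho>] unfolding X_def en .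
      have Y: "Y \<in> space (mmp mu m)"
        using tcat_space[OF tcat_space[OF \<rho> sp(3)] sp(2)[unfolded b_def]] unfolding Y_def em .
      have fX: "f (lift_map g n X) = f X"
        using assms(14) X g unfolding const_on_orbits_def orbit_def by blast
      have fY: "f' (lift_map g m Y) = f' Y"
        using assms(15) Y g unfolding const_on_orbits_def orbit_def by blast
      have "?F (lift_map g k \<rho>) = f (lift_map g n X) * f' (lift_map g m Y)"
        unfolding contr_integrand_def X_def Y_def a_def b_def tcat_lift en em ..
      thus ?thesis using fX fY unfolding contr_integrand_def X_def Y_def by simp
    qed
    have inteq: "(\<integral>\<rho>. ?F \<rho> \<partial>?M) = (\<integral>\<rho>. contr_integrand n m k r f f' \<alpha> \<beta> \<gamma> \<rho> \<partial>?M)"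
    proof -
      have "(\<integral>\<rho>. ?F \<rho> \<partial>?M) = (\<integral>\<rho>. ?F \<rho> \<partial>distr ?M ?M (lift_map g k))" using Lm(2) by simp
      also have "\<dots> = (\<integral>\<rho>. ?F (lift_map g k \<rho>) \<partial>?M)" by (rule integral_distr[OF Lm(1) Fm])
      also have "\<dots> = (\<integral>\<rho>. contr_integrand n m k r f f' \<alpha> \<beta> \<gamma> \<rho> \<partial>?M)"
        by (intro Bochner_Integration.integral_cong refl pw)
      finally show ?thesis .
    qed
    show "contraction mu n m k r f f' w = contraction mu n m k r f f' z"
      unfolding contraction_def Let_def a_def[symmetric] b_def[symmetric]
        \<alpha>_def[symmetric] \<beta>_def[symmetric] \<gamma>_def[symmetric] tw prodeq inteq ..
  qed
qed

end
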